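(* For the SVIQS system, let $\widetilde R_0=\frac{1}{\langle k\rangle}\sum_{i=1}^n\frac{\lambda(i)\varphi(i)p(i)\Lambda_i}{d(\gamma+\beta+d)}$ (the value of $R_0$ when all $\mu_k=0$). If $\widetilde R_0<1$, then the disease-free equilibrium $E^0$ is globally asymptotically stable: it is Lyapunov stable, and every solution with initial data satisfying $S_k(0),V_k(0),I_k(0),Q_k(0)\ge0$ and $S_k(0)+V_k(0)+I_k(0)+Q_k(0)=N_k^*$ for all $k$ converges to $E^0$ as $t\to\infty$.
   Context: Fix an integer $n\ge1$ and numbers $p(1),\dots,p(n)>0$ with $\sum_{k=1}^n p(k)=1$; set $\langle k\rangle=\sum_{k=1}^n kp(k)$. Fix constants $b>d>0$ and let $\Phi^*>0$ satisfy $\Phi^*=\frac{1}{\langle k\rangle}\sum_{i=1}^n \frac{i\,p(i)\,b\Phi^*}{d+bi\Phi^*}$. For $k=1,\dots,n$ put $N_k^*=\frac{bk\Phi^*}{d+bk\Phi^*}\in(0,1)$ and $\Lambda_k=bk(1-N_k^* )\Phi^*$ (so $\Lambda_k=dN_k^*>0$). Parameters: $\lambda(k)>0$, $\varphi(k)>0$, $\mu_k>0$ for $k=1,\dots,n$; constants $\beta,\gamma,\eta,\omega>0$ and $\delta\in[0,1]$. For functions $I_1(t),\dots,I_n(t)$ set $\Theta(t)=\frac{1}{\langle k\rangle}\sum_{i=1}^n\varphi(i)p(i)I_i(t)$. The SVIQS system is, for $k=1,\dots,n$: $S_k'=\Lambda_k-\lambda(k)S_k\Theta+\gamma I_k+\eta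 Q_k+\omega V_k-(\mu_k+d)S_k$, $V_k'=\mu_kS_k-\delta\lambda(k)V_k\Theta-(d+\omega)V_k$, $I_k'=\lambda(k)S_k\Theta+\delta\lambda(k)V_k\Theta-(\gamma+\beta+d)I_k$, $Q_k'=\beta I_k-(\eta+d)Q_k$. Its disease-free equilibrium $E^0$ is $S_k^0=\frac{(d+\omega)N_k^*}{\mu_k+\omega+d}$, $V_k^0=\frac{\mu_kN_k^*}{\mu_k+\omega+d}$, $I_k^0=Q_k^0=0$. *)

theory Defs
  imports "HOL-Analysis.Analysis"
begin

definition mean_deg :: "nat \<Rightarrow> (nat \<Rightarrow> real) \<Rightarrow> real" where
  "mean_deg n p = (\<Sum>k=1..n. real k * p k)"

definition Nstar :: "real \<Rightarrow> real \<Rightarrow> real \<Rightarrow> nat \<Rightarrow> real" where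
  "Nstar b d Phi k = b * real k * Phi / (d + b * real k * Phi)"

definition Lam :: "real \<Rightarrow> real \<Rightarrow> real \<Rightarrow> nat \<Rightarrow> real" where
  "Lam b d Phi k = b * real k * (1 - Nstar b d Phi k) * Phi"

definition Theta :: "nat \<Rightarrow> (nat \<Rightarrow> real) \<Rightarrow> (nat \<Rightarrow> real) \<Rightarrow> (nat \<Rightarrow> real \<Rightarrow> real) \<Rightarrow> real \<Rightarrow> real" where
  "Theta n p phi I t = (1 / mean_deg n p) * (\<Sum>i=1..n. phi i * p i * I i t)"

definition sviqs_solution ::
  "nat \<Rightarrow> (nat \<Rightarrow> real) \<Rightarrow> real \<Rightarrow> real \<Rightarrow> real \<Rightarrow>
   (nat \<Rightarrow> real) \<Rightarrow> (nat \<Rightarrow> real) \<Rightarrow> (nat \<Rightarrow> real) \<Rightarrow>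
   real \<Rightarrow> real \<Rightarrow> real \<Rightarrow> real \<Rightarrow> real \<Rightarrow>
   (nat \<Rightarrow> real \<Rightarrow> real) \<Rightarrow> (nat \<Rightarrow> real \<Rightarrow> real) \<Rightarrow>
   (nat \<Rightarrow> real \<Rightarrow> real) \<Rightarrow> (nat \<Rightarrow> real \<Rightarrow> real) \<Rightarrow> bool" where
  "sviqs_solution n p b d Phi lam phi mu beta gamma eta omega dlt S V I Q \<longleftrightarrow>
    (\<forall>k\<in>{1..n}. \<forall>t\<ge>0.
      ((S k) has_real_derivative
         (Lam b d Phi k - lam k * S k t * Theta n p phi I t + gamma * I k t + eta * Q k t
          + omega * V k t - (mu k + d) * S k t)) (at t within {0..}) \<and>
      ((V k) has_real_derivative
         (mu k * S k t - dlt * lam k * V k t * Theta n p phi I t - (d + omega) * V k t))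
         (at t within {0..}) \<and>
      ((I k) has_real_derivative
         (lam k * S k t * Theta n p phi I t + dlt * lam k * V k t * Theta n p phi I t
          - (gamma + beta + d) * I k t)) (at t within {0..}) \<and>
      ((Q k) has_real_derivative (beta * I k t - (eta + d) * Q k t)) (at t within {0..}))"

definition S0 :: "real \<Rightarrow> real \<Rightarrow> real \<Rightarrow> (nat \<Rightarrow> real) \<Rightarrow> real \<Rightarrow> nat \<Rightarrow> real" where
  "S0 b d Phi mu omega k = (d + omega) * Nstar b d Phi k / (mu k + omega + d)"

definition V0 :: "real \<Rightarrow> real \<Rightarrow> real \<Rightarrow> (nat \<Rightarrow> real) \<Rightarrow> real \<Rightarrow> nat \<Rightarrow> real" where
  "V0 b d Phi mu omega k = mu k * Nstar b d Phi k / (mu k + omega + d)"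

definition feasible_init ::
  "nat \<Rightarrow> real \<Rightarrow> real \<Rightarrow> real \<Rightarrow>
   (nat \<Rightarrow> real \<Rightarrow> real) \<Rightarrow> (nat \<Rightarrow> real \<Rightarrow> real) \<Rightarrow>
   (nat \<Rightarrow> real \<Rightarrow> real) \<Rightarrow> (nat \<Rightarrow> real \<Rightarrow> real) \<Rightarrow> bool" where
  "feasible_init n b d Phi S V I Q \<longleftrightarrow>
    (\<forall>k\<in>{1..n}. S k 0 \<ge> 0 \<and> V k 0 \<ge> 0 \<and> I k 0 \<ge> 0 \<and> Q k 0 \<ge> 0 \<and>
       S k 0 + V k 0 + I k 0 + Q k 0 = Nstar b d Phi k)"

definition R0_tilde ::
  "nat \<Rightarrow> (nat \<Rightarrow> real) \<Rightarrow> real \<Rightarrow> real \<Rightarrow> real \<Rightarrow> (nat \<Rightarrow> real) \<Rightarrow> (nat \<Rightarrow> real)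
   \<Rightarrow> real \<Rightarrow> real \<Rightarrow> real" where
  "R0_tilde n p b d Phi lam phi beta gamma =
    (1 / mean_deg n p) *
    (\<Sum>i=1..n. lam i * phi i * p i * Lam b d Phi i / (d * (gamma + beta + d)))"

end

theory Submission
  imports Defs
begin


lemma mvt0:
  fixes f f' :: "real \<Rightarrow> real"
  assumes D: "\<forall>t\<ge>0. (f has_real_derivative f' t) (at t within {0..})"
    and "0 \<le> a" "a < b"
  shows "\<exists>x\<in>{a<..<b}. f b - f a = f' x * (b - a)"
proof -
  have "\<exists>x\<in>{a<..<b}. f b - f a = (\<lambda>h. f' x * h) (b - a)"
  proof (rule mvt_simple[OF \<open>a<b\<close>])
    fix x assume "a \<le> x" "x \<le> b"
    then have "(f has_real_derivative f' x) (at x within {0..})" using D assms(2) by auto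
    then have "(f has_real_derivative f' x) (at x within {a..b})"
      by (rule has_field_derivative_subset) (use assms in auto)
    then show "(f has_derivative (\<lambda>h. f' x * h)) (at x within {a..b})"
      by (simp add: has_field_derivative_def)
  qed
  then show ?thesis by simp
qed

lemma noninc0:
  fixes f f' :: "real \<Rightarrow> real"
  assumes D: "\<forall>t\<ge>0. (f has_real_derivative f' t) (at t within {0..})"
    and N: "\<forall>t\<ge>0. f' t \<le> 0" and t: "t \<ge> 0"
  shows "f t \<le> f 0"
proof (cases "t = 0")
  case False
  then have "0 < t" using t by simp
  from mvt0[OF D order_refl this] obtain x where x: "x\<in>{0<..<t}" "f t - f 0 = f' x * (t - 0)" by blast
  have "f' x \<le> 0" using N x(1) by auto
  then have "f' x * (t - 0) \<le> 0" using t by (simp add: mult_nonpos_nonneg)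
  then show ?thesis using x(2) by simp
qed simp

lemma decay:
  fixes f f' :: "real \<Rightarrow> real"
  assumes D: "\<forall>t\<ge>0. (f has_real_derivative f' t) (at t within {0..})"
    and B: "\<forall>t\<ge>0. f' t \<le> - a * f t + K * exp (- b * t)"
    and ab: "0 < b" "b < a" and K: "K \<ge> 0"
  shows "\<forall>t\<ge>0. f t \<le> (\<bar>f 0\<bar> + K / (a - b)) * exp (- b * t)"
proof (intro allI impI)
  fix t :: real assume t: "t \<ge> 0"
  define g where "g s = f s * exp (a * s) - K / (a - b) * exp ((a - b) * s)" for s
  define g' where "g' s = exp (a * s) * (f' s + a * f s - K * exp (- b * s))" for s
  have Dg: "\<forall>s\<ge>0. (g has_real_derivative g' s) (at s within {0..})"
  proof (intro allI impI)
    fix s :: real assume s: "s \<ge> 0"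
    have "(g has_real_derivative (f' s * exp (a * s) + f s * (exp (a * s) * a)
            - K / (a - b) * (exp ((a - b) * s) * (a - b)))) (at s within {0..})"
      unfolding g_def using D s
      by (auto intro!: derivative_eq_intros)
    moreover have "f' s * exp (a * s) + f s * (exp (a * s) * a)
            - K / (a - b) * (exp ((a - b) * s) * (a - b)) = g' s"
    proof -
      have "exp ((a - b) * s) = exp (a * s) * exp (- b * s)"
        by (simp add: exp_add[symmetric] algebra_simps)
      then show ?thesis using ab unfolding g'_def by (simp add: field_simps)
    qed
    ultimately show "(g has_real_derivative g' s) (at s within {0..})" by simp
  qed
  have "\<forall>s\<ge>0. g' s \<le> 0"
  proof (intro allI impI)
    fix s :: real assume "s \<ge> 0"
    then have "f' s + a * f s - K * exp (- b * s) \<le> 0" using B by fastforce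
    then show "g' s \<le> 0" unfolding g'_def by (simp add: mult_nonneg_nonpos)
  qed
  from noninc0[OF Dg this t] have "g t \<le> g 0" .
  then have 1: "f t * exp (a * t) \<le> f 0 - K / (a - b) + K / (a - b) * exp ((a - b) * t)"
    unfolding g_def by simp
  have ea: "exp (a * t) > 0" by simp
  have 2: "f t \<le> (f 0 - K / (a - b)) * exp (- a * t) + K / (a - b) * exp (- b * t)"
  proof -
    have "f t = f t * exp (a * t) * exp (- a * t)" by (simp add: exp_minus field_simps)
    also have "\<dots> \<le> (f 0 - K / (a - b) + K / (a - b) * exp ((a - b) * t)) * exp (- a * t)"
      using 1 by (intro mult_right_mono) auto
    also have "\<dots> = (f 0 - K / (a - b)) * exp (- a * t) + K / (a - b) * (exp ((a - b) * t) * exp (- a * t))"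
      by (simp add: algebra_simps)
    also have "exp ((a - b) * t) * exp (- a * t) = exp (- b * t)"
      by (simp add: exp_add[symmetric] algebra_simps)
    finally show ?thesis .
  qed
  have "K / (a - b) \<ge> 0" using K ab by simp
  then have "f 0 - K / (a - b) \<le> \<bar>f 0\<bar>" by linarith
  then have "(f 0 - K / (a - b)) * exp (- a * t) \<le> \<bar>f 0\<bar> * exp (- a * t)"
    by (intro mult_right_mono) auto
  also have "\<dots> \<le> \<bar>f 0\<bar> * exp (- b * t)"
    using ab t by (intro mult_left_mono) (auto intro: mult_right_mono)
  finally show "f t \<le> (\<bar>f 0\<bar> + K / (a - b)) * exp (- b * t)"
    using 2 by (simp add: algebra_simps)
qed



lemma cont0:
  fixes f f' :: "real \<Rightarrow> real"
  assumes D: "\<forall>t\<ge>0. (f has_real_derivative f' t) (at t within {0..})"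
  shows "continuous_on {0..} f"
  by (rule DERIV_continuous_on[of _ _ f']) (use D in auto)

lemma pos_invariance:
  fixes x x' :: "'j \<Rightarrow> real \<Rightarrow> real" and J :: "'j set"
  assumes fin: "finite J"
   and D: "\<forall>j\<in>J. \<forall>t\<ge>0. (x j has_real_derivative x' j t) (at t within {0..})"
   and init: "\<forall>j\<in>J. x j 0 \<ge> 0"
   and Q: "\<forall>B\<ge>0. \<exists>L\<ge>0. \<forall>t\<ge>0. \<forall>j\<in>J. \<forall>m\<ge>0. (\<forall>i\<in>J. \<bar>x i t\<bar> \<le> B) \<longrightarrow>
              (\<forall>i\<in>J. x i t \<ge> -m) \<longrightarrow> x j t < 0 \<longrightarrow> x' j t \<ge> -L*m"
  shows "\<forall>j\<in>J. \<forall>t\<ge>0. x j t \<ge> 0"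
proof (rule ccontr)
  assume "\<not> ?thesis"
  then obtain j0 t0 where j0: "j0 \<in> J" "t0 \<ge> 0" "x j0 t0 < 0" by force
  have C: "continuous_on {0..} (x j)" if "j \<in> J" for j
    using D that by (intro cont0[of _ "x' j"]) auto
  define N where "N = {t. t \<ge> 0 \<and> (\<exists>j\<in>J. x j t < 0)}"
  define T where "T = Inf N"
  have Nne: "N \<noteq> {}" using j0 unfolding N_def by blast
  have Nbdd: "bdd_below N" unfolding N_def by (rule bdd_belowI[of _ 0]) auto
  have T0: "T \<ge> 0" unfolding T_def by (rule cInf_greatest[OF Nne]) (auto simp: N_def)
  have before: "\<forall>j\<in>J. x j s \<ge> 0" if "0 \<le> s" "s < T" for s
  proof (rule ccontr)
    assume "\<not> (\<forall>j\<in>J. x j s \<ge> 0)"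
    then have "s \<in> N" using that unfolding N_def by (auto simp: not_le)
    then have "T \<le> s" unfolding T_def by (rule cInf_lower[OF _ Nbdd])
    then show False using that by simp
  qed
  have atT: "x j T \<ge> 0" if j: "j \<in> J" for j
  proof (cases "T = 0")
    case True then show ?thesis using init j by simp
  next
    case False
    then have Tp: "T > 0" using T0 by simp
    show ?thesis
    proof (rule ccontr)
      assume neg: "\<not> x j T \<ge> 0"
      from C[OF j] T0 obtain d where d: "d > 0"
        "\<forall>x''\<in>{0..}. dist x'' T < d \<longrightarrow> dist (x j x'') (x j T) < - x j T"
        unfolding continuous_on_iff using neg by (metis atLeast_iff neg_0_less_iff_less not_le)
      define s where "s = max 0 (T - d/2)"
      have s: "0 \<le> s" "s < T" "dist s T < d" using d Tp unfolding s_def dist_real_def by auto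
      have "dist (x j s) (x j T) < - x j T" using d s by auto
      then have "x j s < 0" unfolding dist_real_def by (smt (verit))
      then show False using before[OF s(1,2)] j by force
    qed
  qed
  have after: "\<exists>t\<in>N. t < T + e" if "e > 0" for e
  proof (rule ccontr)
    assume "\<not> ?thesis"
    then have "T + e \<le> T" unfolding T_def by (intro cInf_greatest[OF Nne]) (auto simp: not_less)
    then show False using that by simp
  qed
  have "continuous_on {T..T+1} (\<lambda>s. \<Sum>j\<in>J. \<bar>x j s\<bar>)"
    by (intro continuous_intros continuous_on_subset[OF C]) (use T0 in auto)
  from continuous_attains_sup[OF compact_Icc _ this] obtain sB where
    sB: "sB \<in> {T..T+1}" "\<forall>y\<in>{T..T+1}. (\<Sum>j\<in>J. \<bar>x j y\<bar>) \<le> (\<Sum>j\<in>J. \<bar>x j sB\<bar>)" by auto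
  define B where "B = (\<Sum>j\<in>J. \<bar>x j sB\<bar>)"
  have B0: "B \<ge> 0" unfolding B_def by (simp add: sum_nonneg)
  have Bb: "\<bar>x i s\<bar> \<le> B" if "i \<in> J" "s \<in> {T..T+1}" for i s
  proof -
    have "\<bar>x i s\<bar> \<le> (\<Sum>j\<in>J. \<bar>x j s\<bar>)" by (rule member_le_sum) (use fin that in auto)
    then show ?thesis using sB that unfolding B_def by force
  qed
  from Q B0 obtain L where L: "L \<ge> 0" "\<forall>t\<ge>0. \<forall>j\<in>J. \<forall>m\<ge>0. (\<forall>i\<in>J. \<bar>x i t\<bar> \<le> B) \<longrightarrow>
              (\<forall>i\<in>J. x i t \<ge> -m) \<longrightarrow> x j t < 0 \<longrightarrow> x' j t \<ge> -L*m" by blast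
  define \<delta> where "\<delta> = min 1 (1 / (2 * (L + 1)))"
  have \<delta>: "\<delta> > 0" "\<delta> \<le> 1" "L * \<delta> \<le> 1/2"
  proof -
    show "\<delta> > 0" "\<delta> \<le> 1" using L unfolding \<delta>_def by auto
    have "L * \<delta> \<le> L * (1 / (2 * (L + 1)))" using L unfolding \<delta>_def by (intro mult_left_mono) auto
    also have "\<dots> \<le> 1/2" using L by (simp add: field_simps)
    finally show "L * \<delta> \<le> 1/2" .
  qed
  define t1 where "t1 = T + \<delta>"
  define PP where "PP = {max 0 (- x i s) | i s. i \<in> J \<and> s \<in> {T..t1}}"
  define M where "M = Sup PP"
  have PPne: "PP \<noteq> {}" using j0 T0 \<delta> unfolding PP_def t1_def by (auto intro!: exI[of _ j0] exI[of _ T])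
  have PPbdd: "bdd_above PP"
  proof (rule bdd_aboveI[of _ B])
    fix y assume "y \<in> PP"
    then obtain i s where "y = max 0 (- x i s)" "i \<in> J" "s \<in> {T..t1}" unfolding PP_def by blast
    moreover have "\<bar>x i s\<bar> \<le> B" using Bb[of i s] \<delta> calculation unfolding t1_def by auto
    ultimately show "y \<le> B" using B0 by auto
  qed
  have Mge: "max 0 (- x i s) \<le> M" if "i \<in> J" "s \<in> {T..t1}" for i s
    unfolding M_def by (rule cSup_upper[OF _ PPbdd]) (use that in \<open>auto simp: PP_def\<close>)
  have M0: "M \<ge> 0" using Mge[of j0 T] j0 T0 \<delta> unfolding t1_def by fastforce
  have half: "x j s \<ge> - M / 2" if j: "j \<in> J" and s: "s \<in> {T..t1}" for j s
  proof (cases "x j s \<ge> 0")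
    case True then show ?thesis using M0 by simp
  next
    case False
    then have xs: "x j s < 0" by simp
    define Z where "Z = {r \<in> {T..s}. 0 \<le> x j r}"
    have Zne: "Z \<noteq> {}" using atT[OF j] s unfolding Z_def by auto
    have Zbdd: "bdd_above Z" unfolding Z_def by (rule bdd_aboveI[of _ s]) auto
    have Zcl: "closed Z" unfolding Z_def
      by (rule continuous_on_closed_Collect_le)
         (use T0 in \<open>auto intro!: continuous_on_subset[OF C[OF j]]\<close>)
    define s0 where "s0 = Sup Z"
    have s0Z: "s0 \<in> Z" unfolding s0_def by (rule closed_contains_Sup[OF Zne Zbdd Zcl])
    then have s0: "T \<le> s0" "s0 \<le> s" "x j s0 \<ge> 0" unfolding Z_def by auto
    have s0s: "s0 < s" using s0 xs by (cases "s0 = s") auto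
    have negafter: "x j r < 0" if "s0 < r" "r \<le> s" for r
    proof (rule ccontr)
      assume "\<not> x j r < 0"
      then have "r \<in> Z" using that s0 unfolding Z_def by auto
      then have "r \<le> s0" unfolding s0_def by (rule cSup_upper[OF _ Zbdd])
      then show False using that by simp
    qed
    have Dj: "\<forall>t\<ge>0. (x j has_real_derivative x' j t) (at t within {0..})" using D j by auto
    from mvt0[OF Dj _ s0s] s0 T0 obtain \<xi> where \<xi>: "\<xi> \<in> {s0<..<s}" "x j s - x j s0 = x' j \<xi> * (s - s0)"
      by auto
    have \<xi>I: "\<xi> \<in> {T..t1}" using \<xi> s0 s by auto
    have "x' j \<xi> \<ge> -L * M"
    proof -
      have "\<forall>i\<in>J. \<bar>x i \<xi>\<bar> \<le> B" using Bb \<xi>I \<delta> unfolding t1_def by auto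
      moreover have "\<forall>i\<in>J. x i \<xi> \<ge> -M" using Mge \<xi>I by force
      moreover have "x j \<xi> < 0" using negafter \<xi> by auto
      moreover have "\<xi> \<ge> 0" using \<xi>I T0 by auto
      ultimately show ?thesis using L(2) j M0 by blast
    qed
    then have "x' j \<xi> * (s - s0) \<ge> -L * M * (s - s0)" using s0s by (intro mult_right_mono) auto
    moreover have "L * M * (s - s0) \<le> L * M * \<delta>"
      using L M0 s0 s unfolding t1_def by (intro mult_left_mono) auto
    moreover have "L * M * \<delta> \<le> M / 2" using \<delta>(3) M0
      by (metis mult.commute mult.left_commute mult_left_mono mult_1_right times_divide_eq_right)
    ultimately show ?thesis using \<xi>(2) s0(3) by linarith
  qed
  have "M \<le> M / 2" unfolding M_def
  proof (rule cSup_least[OF PPne])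
    fix y assume "y \<in> PP"
    then obtain i s where "y = max 0 (- x i s)" "i \<in> J" "s \<in> {T..t1}" unfolding PP_def by blast
    then show "y \<le> Sup PP / 2" using half[of i s] M0 unfolding M_def by auto
  qed
  then have M00: "M = 0" using M0 by simp
  from after[OF \<delta>(1)] obtain t where t: "t \<in> N" "t < T + \<delta>" by blast
  then obtain j where j: "j \<in> J" "x j t < 0" "t \<ge> 0" unfolding N_def by blast
  have "T \<le> t" unfolding T_def by (rule cInf_lower[OF t(1) Nbdd])
  then have "x j t \<ge> - M / 2" using half[OF j(1)] t unfolding t1_def by auto
  then show False using M00 j by simp
qed



lemma prod_lb:
  fixes a b m al be A Bb :: real
  assumes "a \<ge> -al*m" "\<bar>a\<bar> \<le> A" "b \<ge> -be*m" "\<bar>b\<bar> \<le> Bb" "al \<ge> 0" "be \<ge> 0" "m \<ge> 0"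
  shows "a*b \<ge> -(al*Bb + be*A)*m"
proof (cases "a \<ge> 0")
  case True
  show ?thesis
  proof (cases "b \<ge> 0")
    case True
    then have "a*b \<ge> 0" using \<open>a\<ge>0\<close> by simp
    moreover have "(al*Bb + be*A)*m \<ge> 0" using assms by (auto intro!: mult_nonneg_nonneg add_nonneg_nonneg simp: abs_le_iff)
    ultimately show ?thesis by linarith
  next
    case False
    have "a*b \<ge> a * (-be*m)" using assms True by (intro mult_left_mono) auto
    moreover have "a * (be*m) \<le> A * (be*m)" using assms True by (intro mult_right_mono) auto
    moreover have "al*Bb*m \<ge> 0" using assms by (auto intro!: mult_nonneg_nonneg simp: abs_le_iff)
    ultimately show ?thesis by (simp add: algebra_simps)
  qed
next
  case False
  show ?thesis
  proof (cases "b \<ge> 0")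
    case True
    have "a*b \<ge> (-al*m) * b" using assms True by (intro mult_right_mono) auto
    moreover have "(al*m) * b \<le> (al*m) * Bb" using assms True by (intro mult_left_mono) auto
    moreover have "be*A*m \<ge> 0" using assms by (auto intro!: mult_nonneg_nonneg simp: abs_le_iff)
    ultimately show ?thesis by (simp add: algebra_simps)
  next
    case False
    then have "a*b \<ge> 0" using \<open>\<not> a\<ge>0\<close> by (simp add: mult_nonpos_nonpos)
    moreover have "(al*Bb + be*A)*m \<ge> 0" using assms by (auto intro!: mult_nonneg_nonneg add_nonneg_nonneg simp: abs_le_iff)
    ultimately show ?thesis by linarith
  qed
qed

lemma Nstar_pos: "b > 0 \<Longrightarrow> d > 0 \<Longrightarrow> Phi > 0 \<Longrightarrow> k \<ge> 1 \<Longrightarrow> Nstar b d Phi k > 0"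
  unfolding Nstar_def by (intro divide_pos_pos) (auto intro!: add_pos_pos mult_pos_pos)

lemma Lam_eq: "b > 0 \<Longrightarrow> d > 0 \<Longrightarrow> Phi > 0 \<Longrightarrow> Lam b d Phi k = d * Nstar b d Phi k"
proof -
  assume "b > 0" "d > 0" "Phi > 0"
  then have "d + b * real k * Phi > 0" by (simp add: add_pos_nonneg)
  then show ?thesis unfolding Lam_def Nstar_def by (simp add: field_simps)
qed



lemma caseS:
  fixes Lm lam S B Th CT m I Q V gamma eta omega mu d beta :: real
  assumes "Lm \<ge> 0" "lam \<ge> 0" "S < 0" "\<bar>S\<bar> \<le> B" "Th \<ge> -CT*m" "\<bar>Th\<bar> \<le> CT*B"
    "I \<ge> -m" "Q \<ge> -m" "V \<ge> -m" "gamma \<ge> 0" "eta \<ge> 0" "omega \<ge> 0" "mu \<ge> 0" "d \<ge> 0"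
    "CT \<ge> 0" "B \<ge> 0" "m \<ge> 0" "beta \<ge> 0"
  shows "Lm - lam*S*Th + gamma*I + eta*Q + omega*V - (mu+d)*S \<ge> -(gamma+eta+ omega+beta+mu+4*lam*CT*B)*m"
proof -
  have "(-S)*Th \<ge> -(1*(CT*B) + CT*B)*m" using assms by (intro prod_lb) auto
  then have 1: "lam*((-S)*Th) \<ge> lam*(-(1*(CT*B) + CT*B)*m)" using assms by (intro mult_left_mono) auto
  have 2: "gamma*I \<ge> gamma*(-m)" by (rule mult_left_mono) (use assms in auto)
  have 21: "eta*Q \<ge> eta*(-m)" by (rule mult_left_mono) (use assms in auto)
  have 22: "omega*V \<ge> omega*(-m)" by (rule mult_left_mono) (use assms in auto)
  have 3: "beta*m \<ge> 0" "mu*m \<ge> 0" "lam*CT*B*m \<ge> 0" "(mu+d)*S \<le> 0"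
    using assms by (auto intro!: mult_nonneg_nonneg mult_nonneg_nonpos)
  show ?thesis using 1 2 21 22 3 assms(1) by (simp add: algebra_simps)
qed

lemma caseV:
  fixes lam S B Th CT m V omega mu d dl :: real
  assumes "lam \<ge> 0" "V < 0" "\<bar>V\<bar> \<le> B" "Th \<ge> -CT*m" "\<bar>Th\<bar> \<le> CT*B"
    "S \<ge> -m" "omega \<ge> 0" "mu \<ge> 0" "d \<ge> 0" "0 \<le> dl" "dl \<le> 1"
    "CT \<ge> 0" "B \<ge> 0" "m \<ge> 0" "X \<ge> 0"
  shows "mu * S - dl * lam * V * Th - (d + omega) * V \<ge> -(X+mu+4*lam*CT*B)*m"
proof -
  have "(-V)*Th \<ge> -(1*(CT*B) + CT*B)*m" using assms by (intro prod_lb) auto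
  then have 1: "lam*((-V)*Th) \<ge> lam*(-(1*(CT*B) + CT*B)*m)" using assms by (intro mult_left_mono) auto
  have 0: "lam*(1*(CT*B) + CT*B)*m \<ge> 0" using assms by (auto intro!: mult_nonneg_nonneg)
  have 4: "dl*(lam*((-V)*Th)) \<ge> - (lam*(1*(CT*B) + CT*B)*m)"
  proof (cases "lam*((-V)*Th) \<ge> 0")
    case True then show ?thesis using 0 assms by (smt (verit) mult_nonneg_nonneg)
  next
    case False
    then have "dl*(lam*((-V)*Th)) \<ge> 1*(lam*((-V)*Th))" using assms by (intro mult_right_mono_neg) auto
    then show ?thesis using 1 by (simp add: algebra_simps)
  qed
  have 2: "mu*S \<ge> mu*(-m)" by (rule mult_left_mono) (use assms in auto)
  have 3: "X*m \<ge> 0" "lam*CT*B*m \<ge> 0" "(d + omega)*V \<le> 0"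
    using assms by (auto intro!: mult_nonneg_nonneg mult_nonneg_nonpos)
  show ?thesis using 2 3 4 by (simp add: algebra_simps)
qed

lemma caseI:
  fixes lam S V B Th CT m I c1 dl :: real
  assumes "lam \<ge> 0" "I < 0" "\<bar>S\<bar> \<le> B" "\<bar>V\<bar> \<le> B" "Th \<ge> -CT*m" "\<bar>Th\<bar> \<le> CT*B"
    "S \<ge> -m" "V \<ge> -m" "c1 \<ge> 0" "0 \<le> dl" "dl \<le> 1"
    "CT \<ge> 0" "B \<ge> 0" "m \<ge> 0" "X \<ge> 0"
  shows "lam * S * Th + dl * lam * V * Th - c1 * I \<ge> -(X+4*lam*CT*B)*m"
proof -
  have "S*Th \<ge> -(1*(CT*B) + CT*B)*m" using assms by (intro prod_lb) auto
  then have 1: "lam*(S*Th) \<ge> lam*(-(1*(CT*B) + CT*B)*m)" using assms by (intro mult_left_mono) auto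
  have "V*Th \<ge> -(1*(CT*B) + CT*B)*m" using assms by (intro prod_lb) auto
  then have 5: "lam*(V*Th) \<ge> lam*(-(1*(CT*B) + CT*B)*m)" using assms by (intro mult_left_mono) auto
  have 0: "lam*(1*(CT*B) + CT*B)*m \<ge> 0" using assms by (auto intro!: mult_nonneg_nonneg)
  have 4: "dl*(lam*(V*Th)) \<ge> - (lam*(1*(CT*B) + CT*B)*m)"
  proof (cases "lam*(V*Th) \<ge> 0")
    case True then show ?thesis using 0 assms by (smt (verit) mult_nonneg_nonneg)
  next
    case False
    then have "dl*(lam*(V*Th)) \<ge> 1*(lam*(V*Th))" using assms by (intro mult_right_mono_neg) auto
    then show ?thesis using 5 by (simp add: algebra_simps)
  qed
  have 3: "X*m \<ge> 0" "c1*I \<le> 0"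
    using assms by (auto intro!: mult_nonneg_nonneg mult_nonneg_nonpos)
  show ?thesis using 1 3 4 by (simp add: algebra_simps)
qed

lemma caseQ:
  fixes m I Q beta e :: real
  assumes "Q < 0" "I \<ge> -m" "beta \<ge> 0" "e \<ge> 0" "m \<ge> 0" "X \<ge> 0"
  shows "beta * I - e * Q \<ge> -(X+beta)*m"
proof -
  have 2: "beta*I \<ge> beta*(-m)" by (rule mult_left_mono) (use assms in auto)
  have 3: "X*m \<ge> 0" "e*Q \<le> 0"
    using assms by (auto intro!: mult_nonneg_nonneg mult_nonneg_nonpos)
  show ?thesis using 2 3 by (simp add: algebra_simps)
qed



lemma core:
  fixes n :: nat and p :: "nat \<Rightarrow> real" and b d Phi :: real
    and lam phi mu :: "nat \<Rightarrow> real" and beta gamma eta omega dlt :: real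
  assumes n_pos: "n \<ge> 1"
    and p_pos: "\<forall>k\<in>{1..n}. p k > 0"
    and bd: "b > d" "d > 0"
    and Phi_pos: "Phi > 0"
    and lam_pos: "\<forall>k\<in>{1..n}. lam k > 0"
    and phi_pos: "\<forall>k\<in>{1..n}. phi k > 0"
    and mu_pos: "\<forall>k\<in>{1..n}. mu k > 0"
    and params: "beta > 0" "gamma > 0" "eta > 0" "omega > 0"
    and dlt: "0 \<le> dlt" "dlt \<le> 1"
    and R0: "R0_tilde n p b d Phi lam phi beta gamma < 1"
  shows "\<exists>r>0. \<exists>K\<ge>0. \<forall>S V I Q.
        sviqs_solution n p b d Phi lam phi mu beta gamma eta omega dlt S V I Q \<and>
        feasible_init n b d Phi S V I Q \<longrightarrow>
        (\<forall>t\<ge>0. \<forall>k\<in>{1..n}.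
           0 \<le> I k t \<and> I k t \<le> K * (\<Sum>i=1..n. \<bar>I i 0\<bar> + \<bar>Q i 0\<bar> + \<bar>V i 0 - V0 b d Phi mu omega i\<bar>) * exp (- r * t) \<and>
           0 \<le> Q k t \<and> Q k t \<le> K * (\<Sum>i=1..n. \<bar>I i 0\<bar> + \<bar>Q i 0\<bar> + \<bar>V i 0 - V0 b d Phi mu omega i\<bar>) * exp (- r * t) \<and>
           \<bar>V k t - V0 b d Phi mu omega k\<bar> \<le> K * (\<Sum>i=1..n. \<bar>I i 0\<bar> + \<bar>Q i 0\<bar> + \<bar>V i 0 - V0 b d Phi mu omega i\<bar>) * exp (- r * t) \<and>
           \<bar>S k t - S0 b d Phi mu omega k\<bar> \<le> K * (\<Sum>i=1..n. \<bar>I i 0\<bar> + \<bar>Q i 0\<bar> + \<bar>V i 0 - V0 b d Phi mu omega i\<bar>) * exp (- r * t))"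
proof -
  have b0: "b > 0" using bd by simp
  have lam0: "lam k > 0" and mu0: "mu k > 0" and phi0: "phi k > 0" and p0: "p k > 0"
    if "k \<in> {1..n}" for k using lam_pos mu_pos phi_pos p_pos that by blast+
  define mk where "mk = mean_deg n p"
  have mk: "mk > 0" unfolding mk_def mean_deg_def
    using n_pos p_pos by (intro sum_pos) auto
  define CT where "CT = (1/mk) * (\<Sum>i=1..n. phi i * p i)"
  have CT0: "CT \<ge> 0" unfolding CT_def using mk phi_pos p_pos
    by (intro mult_nonneg_nonneg sum_nonneg) (auto intro!: mult_nonneg_nonneg less_imp_le)
  define c1 where "c1 = gamma + beta + d"
  have c1: "c1 > 0" unfolding c1_def using params bd by simp
  define R where "R = R0_tilde n p b d Phi lam phi beta gamma"
  define c where "c = c1 * (1 - R)"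
  have c: "c > 0" unfolding c_def R_def using c1 R0 by simp
  define r where "r = min (c/2) (min (c1/2) (min ((eta + d)/2) ((d + omega)/2)))"
  have r: "r > 0" "r < c" "r < c1" "r < eta + d" "r < d + omega"
    unfolding r_def using c c1 params bd by (auto simp: min_less_iff_disj)
  define Ns where "Ns k = Nstar b d Phi k" for k
  have Ns: "Ns k > 0" if "k \<in> {1..n}" for k
    unfolding Ns_def using Nstar_pos[OF b0 bd(2) Phi_pos] that by auto
  define KI where "KI k = 1 + lam k * Ns k * CT / (c1 - r)" for k
  define KQ where "KQ k = 1 + beta * KI k / (eta + d - r)" for k
  define KV where "KV k = 1 + (mu k * (KI k + KQ k) + lam k * Ns k * CT) / (mu k + d + omega - r)" for k
  define K where "K = (\<Sum>k=1..n. KV k + KI k + KQ k)"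
  have KI: "KI k \<ge> 1" if "k \<in> {1..n}" for k
  proof -
    have "lam k * Ns k * CT / (c1 - r) \<ge> 0" using lam0[OF that] Ns[OF that] CT0 r that
      by (intro divide_nonneg_pos mult_nonneg_nonneg) auto
    then show ?thesis unfolding KI_def by simp
  qed
  have KQ: "KQ k \<ge> 1" if "k \<in> {1..n}" for k
  proof -
    have "beta * KI k / (eta + d - r) \<ge> 0" using KI[OF that] r params
      by (intro divide_nonneg_pos mult_nonneg_nonneg) auto
    then show ?thesis unfolding KQ_def by simp
  qed
  have KV: "KV k \<ge> 1" if "k \<in> {1..n}" for k
  proof -
    have "(mu k * (KI k + KQ k) + lam k * Ns k * CT) / (mu k + d + omega - r) \<ge> 0"
      using KI[OF that] KQ[OF that] r params mu0[OF that] lam0[OF that] Ns[OF that] CT0 that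
      by (intro divide_nonneg_pos add_nonneg_nonneg mult_nonneg_nonneg) (auto simp: less_imp_le)
    then show ?thesis unfolding KV_def by simp
  qed
  have Kk: "KV k + KI k + KQ k \<le> K" if "k \<in> {1..n}" for k
  proof -
    have Kn: "KV i + KI i + KQ i \<ge> 0" if "i\<in>{1..n}" for i
      using KI[OF that] KQ[OF that] KV[OF that] by linarith
    show ?thesis unfolding K_def using that by (intro member_le_sum Kn) auto
  qed
  have K0: "K \<ge> 0" using Kk[of 1] KI[of 1] KQ[of 1] KV[of 1] n_pos by force
  show ?thesis
  proof (rule exI[of _ r], rule conjI[OF r(1)], rule exI[of _ K], rule conjI[OF K0], intro allI, rule impI)
    fix S V I Q
    assume as: "sviqs_solution n p b d Phi lam phi mu beta gamma eta omega dlt S V I Q \<and>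
        feasible_init n b d Phi S V I Q"
    define Th where "Th = Theta n p phi I"
    define S' where "S' k t = Lam b d Phi k - lam k * S k t * Th t + gamma * I k t + eta * Q k t
          + omega * V k t - (mu k + d) * S k t" for k t
    define V' where "V' k t = mu k * S k t - dlt * lam k * V k t * Th t - (d + omega) * V k t" for k t
    define I' where "I' k t = lam k * S k t * Th t + dlt * lam k * V k t * Th t
          - (gamma + beta + d) * I k t" for k t
    define Q' where "Q' k t = beta * I k t - (eta + d) * Q k t" for k t
    have DS: "\<forall>t\<ge>0. (S k has_real_derivative S' k t) (at t within {0..})"
     and DV: "\<forall>t\<ge>0. (V k has_real_derivative V' k t) (at t within {0..})"
     and DI: "\<forall>t\<ge>0. (I k has_real_derivative I' k t) (at t within {0..})"
     and DQ: "\<forall>t\<ge>0. (Q k has_real_derivative Q' k t) (at t within {0..})"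
      if "k \<in> {1..n}" for k
      using as that unfolding sviqs_solution_def S'_def V'_def I'_def Q'_def Th_def by blast+
    have init: "S k 0 \<ge> 0" "V k 0 \<ge> 0" "I k 0 \<ge> 0" "Q k 0 \<ge> 0"
      "S k 0 + V k 0 + I k 0 + Q k 0 = Ns k" if "k \<in> {1..n}" for k
      using as that unfolding feasible_init_def Ns_def by blast+
    have Th_eq: "Th t = (1/mk) * (\<Sum>i=1..n. phi i * p i * I i t)" for t
      unfolding Th_def Theta_def mk_def ..
    define J where "J = {1..n} \<times> {0..(3::nat)}"
    define x where "x = (\<lambda>(k,j::nat). if j = 0 then S k else if j = 1 then V k else if j = 2 then I k else Q k)"
    define x' where "x' = (\<lambda>(k,j::nat). if j = 0 then S' k else if j = 1 then V' k else if j = 2 then I' k else Q' k)"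
    have pos: "\<forall>j\<in>J. \<forall>t\<ge>0. x j t \<ge> 0"
    proof (rule pos_invariance)
      show "finite J" unfolding J_def by simp
      show "\<forall>j\<in>J. \<forall>t\<ge>0. (x j has_real_derivative x' j t) (at t within {0..})"
        unfolding J_def x_def x'_def using DS DV DI DQ by auto
      show "\<forall>j\<in>J. x j 0 \<ge> 0" unfolding J_def x_def using init by auto
      show "\<forall>B\<ge>0. \<exists>L\<ge>0. \<forall>t\<ge>0. \<forall>j\<in>J. \<forall>m\<ge>0. (\<forall>i\<in>J. \<bar>x i t\<bar> \<le> B) \<longrightarrow>
              (\<forall>i\<in>J. x i t \<ge> -m) \<longrightarrow> x j t < 0 \<longrightarrow> x' j t \<ge> -L*m"
      proof (intro allI impI)
        fix B :: real assume B0: "B \<ge> 0"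
        define Lk where "Lk k = gamma + eta + omega + beta + mu k + 4 * lam k * CT * B" for k
        define L where "L = (\<Sum>k=1..n. Lk k)"
        have Lk0: "Lk k \<ge> 0" if "k \<in> {1..n}" for k
          unfolding Lk_def using mu0[OF that] lam0[OF that] CT0 B0 params
          by (intro add_nonneg_nonneg mult_nonneg_nonneg) auto
        have LkL: "Lk k \<le> L" if "k \<in> {1..n}" for k
          unfolding L_def using that by (intro member_le_sum Lk0) auto
        have L0: "L \<ge> 0" using LkL[of 1] Lk0[of 1] n_pos by force
        show "\<exists>L\<ge>0. \<forall>t\<ge>0. \<forall>j\<in>J. \<forall>m\<ge>0. (\<forall>i\<in>J. \<bar>x i t\<bar> \<le> B) \<longrightarrow>
              (\<forall>i\<in>J. x i t \<ge> -m) \<longrightarrow> x j t < 0 \<longrightarrow> x' j t \<ge> -L*m"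
        proof (intro exI[of _ L] conjI[OF L0] allI impI ballI)
          fix t :: real and j m
          assume t: "t \<ge> 0" and j: "j \<in> J" and m: "m \<ge> 0" and bndB: "\<forall>i\<in>J. \<bar>x i t\<bar> \<le> B"
            and bndm: "\<forall>i\<in>J. x i t \<ge> -m" and neg: "x j t < 0"
          obtain k cc where jk: "j = (k, cc)" "k \<in> {1..n}" "cc \<le> 3" using j unfolding J_def by auto
          have inJ: "(i,c') \<in> J" if "i \<in> {1..n}" "c' \<le> 3" for i c' using that unfolding J_def by auto
          have xb: "\<bar>x (i,c') t\<bar> \<le> B" "x (i,c') t \<ge> -m" if "i \<in> {1..n}" "c' \<le> 3" for i c'
            using bndB bndm inJ[OF that] by blast+
          have Sb: "\<bar>S i t\<bar> \<le> B" "S i t \<ge> -m" if "i \<in> {1..n}" for i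
            using xb[OF that, of 0] unfolding x_def by auto
          have Vb: "\<bar>V i t\<bar> \<le> B" "V i t \<ge> -m" if "i \<in> {1..n}" for i
            using xb[OF that, of 1] unfolding x_def by auto
          have Ib: "\<bar>I i t\<bar> \<le> B" "I i t \<ge> -m" if "i \<in> {1..n}" for i
            using xb[OF that, of 2] unfolding x_def by auto
          have Qb: "\<bar>Q i t\<bar> \<le> B" "Q i t \<ge> -m" if "i \<in> {1..n}" for i
            using xb[OF that, of 3] unfolding x_def by auto
          have pp0: "phi i * p i \<ge> 0" if "i \<in> {1..n}" for i
            using phi0[OF that] p0[OF that] by simp
          have ThL: "Th t \<ge> -CT*m"
          proof -
            have "(\<Sum>i=1..n. phi i * p i * (-m)) \<le> (\<Sum>i=1..n. phi i * p i * I i t)"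
              by (intro sum_mono mult_left_mono Ib(2) pp0) auto
            then have "(1/mk) * (\<Sum>i=1..n. phi i * p i * (-m)) \<le> (1/mk) * (\<Sum>i=1..n. phi i * p i * I i t)"
              using mk by (intro mult_left_mono) auto
            moreover have "(1/mk) * (\<Sum>i=1..n. phi i * p i * (-m)) = -CT*m"
              unfolding CT_def by (simp add: sum_distrib_right sum_negf)
            ultimately show ?thesis using Th_eq[of t] by simp
          qed
          have ThU: "\<bar>Th t\<bar> \<le> CT*B"
          proof -
            have "\<bar>\<Sum>i=1..n. phi i * p i * I i t\<bar> \<le> (\<Sum>i=1..n. \<bar>phi i * p i * I i t\<bar>)"
              by (rule sum_abs)
            also have "\<dots> \<le> (\<Sum>i=1..n. phi i * p i * B)"
            proof (rule sum_mono)
              fix i assume i: "i \<in> {1..n}"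
              have "\<bar>phi i * p i * I i t\<bar> = phi i * p i * \<bar>I i t\<bar>" using pp0[OF i] by (simp only: abs_mult[of "phi i * p i"] abs_of_nonneg)
              also have "\<dots> \<le> phi i * p i * B" using pp0[OF i] Ib(1)[OF i] by (intro mult_left_mono) auto
              finally show "\<bar>phi i * p i * I i t\<bar> \<le> phi i * p i * B" .
            qed
            finally have "(1/mk) * \<bar>\<Sum>i=1..n. phi i * p i * I i t\<bar> \<le> (1/mk) * (\<Sum>i=1..n. phi i * p i * B)"
              using mk by (intro mult_left_mono) auto
            moreover have "(1/mk) * (\<Sum>i=1..n. phi i * p i * B) = CT*B"
              unfolding CT_def by (simp add: sum_distrib_right)
            ultimately show ?thesis using Th_eq[of t] mk by (simp add: abs_mult)
          qed
          have Lam0: "Lam b d Phi k \<ge> 0" using Lam_eq[OF b0 bd(2) Phi_pos] Ns[OF jk(2)] bd unfolding Ns_def by simp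
          have main: "x' j t \<ge> -(Lk k)*m"
          proof -
            have "cc = 0 \<or> cc = 1 \<or> cc = 2 \<or> cc = 3" using jk(3) by auto
            then show ?thesis
            proof (elim disjE)
              assume "cc = 0"
              then have "S k t < 0" using neg jk unfolding x_def by simp
              then have "S' k t \<ge> -(Lk k)*m" unfolding S'_def Lk_def
                using Lam0 lam0[OF jk(2)] Sb[OF jk(2)] ThL ThU Ib[OF jk(2)] Qb[OF jk(2)] Vb[OF jk(2)]
                   params mu0[OF jk(2)] bd CT0 B0 m
                by (intro caseS) auto
              then show ?thesis using \<open>cc = 0\<close> jk unfolding x'_def by simp
            next
              assume "cc = 1"
              then have "V k t < 0" using neg jk unfolding x_def by simp
              then have "V' k t \<ge> -(Lk k)*m" unfolding V'_def Lk_def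
                using lam0[OF jk(2)] Sb[OF jk(2)] ThL ThU Vb[OF jk(2)]
                   params mu0[OF jk(2)] bd CT0 B0 m dlt
                by (intro caseV) auto
              then show ?thesis using \<open>cc = 1\<close> jk unfolding x'_def by simp
            next
              assume "cc = 2"
              then have "I k t < 0" using neg jk unfolding x_def by simp
              then have "I' k t \<ge> -(Lk k)*m" unfolding I'_def Lk_def
                using lam0[OF jk(2)] Sb[OF jk(2)] ThL ThU Vb[OF jk(2)]
                   params mu0[OF jk(2)] bd CT0 B0 m dlt
                by (intro caseI) auto
              then show ?thesis using \<open>cc = 2\<close> jk unfolding x'_def by simp
            next
              assume "cc = 3"
              then have "Q k t < 0" using neg jk unfolding x_def by simp
              then have "Q' k t \<ge> -((gamma + eta + omega + mu k + 4 * lam k * CT * B) + beta)*m" unfolding Q'_def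
                using lam0[OF jk(2)] Ib[OF jk(2)] params mu0[OF jk(2)] bd CT0 B0 m
                by (intro caseQ) auto
              moreover have "Lk k = (gamma + eta + omega + mu k + 4 * lam k * CT * B) + beta"
                unfolding Lk_def by simp
              ultimately show ?thesis using \<open>cc = 3\<close> jk unfolding x'_def by simp
            qed
          qed
          have "-L*m \<le> -(Lk k)*m" using LkL[OF jk(2)] m by (intro mult_right_mono) auto
          then show "x' j t \<ge> -L*m" using main by linarith
        qed
      qed
    qed
    have posS: "S k t \<ge> 0" and posV: "V k t \<ge> 0" and posI: "I k t \<ge> 0" and posQ: "Q k t \<ge> 0"
      if "k \<in> {1..n}" "t \<ge> 0" for k t
  proof -
    have "(k,j) \<in> J" if "j \<le> 3" for j using that \<open>k \<in> {1..n}\<close> unfolding J_def by auto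
    then have "x (k,j) t \<ge> 0" if "j \<le> 3" for j using pos that \<open>t \<ge> 0\<close> by blast
    from this[of 0] this[of 1] this[of 2] this[of 3]
    show "S k t \<ge> 0" "V k t \<ge> 0" "I k t \<ge> 0" "Q k t \<ge> 0" unfolding x_def by simp_all
  qed
    define D0 where "D0 = (\<Sum>i=1..n. \<bar>I i 0\<bar> + \<bar>Q i 0\<bar> + \<bar>V i 0 - V0 b d Phi mu omega i\<bar>)"
    have D0i: "\<bar>I i 0\<bar> \<le> D0" "\<bar>Q i 0\<bar> \<le> D0" "\<bar>V i 0 - V0 b d Phi mu omega i\<bar> \<le> D0" if "i \<in> {1..n}" for i
    proof -
      have "\<bar>I i 0\<bar> + \<bar>Q i 0\<bar> + \<bar>V i 0 - V0 b d Phi mu omega i\<bar> \<le> D0"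
        unfolding D0_def using that by (intro member_le_sum) auto
      then show "\<bar>I i 0\<bar> \<le> D0" "\<bar>Q i 0\<bar> \<le> D0" "\<bar>V i 0 - V0 b d Phi mu omega i\<bar> \<le> D0" by auto
    qed
    have D00: "D0 \<ge> 0" unfolding D0_def by (intro sum_nonneg) auto
    have DSr: "(S k has_real_derivative S' k t) (at t within {0..})"
     and DVr: "(V k has_real_derivative V' k t) (at t within {0..})"
     and DIr: "(I k has_real_derivative I' k t) (at t within {0..})"
     and DQr: "(Q k has_real_derivative Q' k t) (at t within {0..})"
      if "k \<in> {1..n}" "t \<ge> 0" for k t
      using DS[OF that(1)] DV[OF that(1)] DI[OF that(1)] DQ[OF that(1)] that(2) by blast+
    have cons: "S k t + V k t + I k t + Q k t = Ns k" if k: "k \<in> {1..n}" and t: "t \<ge> 0" for k t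
    proof -
      define f where "f s = S k s + V k s + I k s + Q k s - Ns k" for s
      define f' where "f' s = S' k s + V' k s + I' k s + Q' k s" for s
      have Df: "\<forall>s\<ge>0. (f has_real_derivative f' s) (at s within {0..})"
        unfolding f_def f'_def using DSr[OF k] DVr[OF k] DIr[OF k] DQr[OF k]
        by (auto intro!: derivative_eq_intros)
      have f'e: "f' s = - d * f s" for s
        unfolding f'_def f_def S'_def V'_def I'_def Q'_def Ns_def
        using Lam_eq[OF b0 bd(2) Phi_pos, of k] by (simp add: algebra_simps)
      have f0: "f 0 = 0" unfolding f_def using init(5)[OF k] by simp
      have Dmf: "\<forall>s\<ge>0. ((\<lambda>s. - f s) has_real_derivative - f' s) (at s within {0..})"
        using Df by (auto intro!: derivative_eq_intros)
      have "f t \<le> (\<bar>f 0\<bar> + 0 / (d - d/2)) * exp (- (d/2) * t)"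
        using decay[OF Df, of d 0 "d/2"] f'e bd t by auto
      moreover have "- f t \<le> (\<bar>- f 0\<bar> + 0 / (d - d/2)) * exp (- (d/2) * t)"
        using decay[OF Dmf, of d 0 "d/2"] f'e bd t by auto
      ultimately have "f t = 0" using f0 by simp
      then show ?thesis unfolding f_def by simp
    qed
    have ThE: "Th = (\<lambda>t. (1/mk) * (\<Sum>i=1..n. phi i * p i * I i t))" using Th_eq by auto
    define Th' where "Th' t = (1/mk) * (\<Sum>i=1..n. phi i * p i * I' i t)" for t
    have DTh: "\<forall>t\<ge>0. (Th has_real_derivative Th' t) (at t within {0..})"
    proof (intro allI impI)
      fix t :: real assume t: "t \<ge> 0"
      show "(Th has_real_derivative Th' t) (at t within {0..})"
        unfolding ThE Th'_def
        by (rule DERIV_cmult, rule DERIV_sum, rule DERIV_cmult, rule DIr) (use t in auto)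
    qed
    have Th0: "Th t \<ge> 0" if "t \<ge> 0" for t
      unfolding Th_eq using mk posI[OF _ that] phi0 p0
      by (intro mult_nonneg_nonneg sum_nonneg) (auto intro!: mult_nonneg_nonneg less_imp_le)
    have SV: "S k t + dlt * V k t \<le> Ns k" if "k \<in> {1..n}" "t \<ge> 0" for k t
    proof -
      have "dlt * V k t \<le> 1 * V k t" using dlt posV[OF that] by (intro mult_right_mono) auto
      then show ?thesis using cons[OF that] posI[OF that] posQ[OF that] by simp
    qed
    have Lam_R: "(1/mk) * (\<Sum>i=1..n. phi i * p i * lam i * Ns i) = c1 * R"
    proof -
      have "(\<Sum>i=1..n. lam i * phi i * p i * Lam b d Phi i / (d * (gamma + beta + d)))
          = (\<Sum>i=1..n. phi i * p i * lam i * Ns i) / c1"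
        unfolding sum_divide_distrib
      proof (intro sum.cong refl)
        fix i
        have cc: "c1 \<noteq> 0" "d \<noteq> 0" using c1 bd by auto
        show "lam i * phi i * p i * Lam b d Phi i / (d * (gamma + beta + d)) = phi i * p i * lam i * Ns i / c1"
          unfolding Lam_eq[OF b0 bd(2) Phi_pos] Ns_def c1_def[symmetric] using cc
          by (simp add: field_simps)
      qed
      then show ?thesis unfolding R_def R0_tilde_def mk_def[symmetric] using c1 by (simp add: field_simps)
    qed
    have Th'le: "Th' t \<le> - c * Th t" if t: "t \<ge> 0" for t
    proof -
      have "(\<Sum>i=1..n. phi i * p i * I' i t) = Th t * (\<Sum>i=1..n. phi i * p i * lam i * (S i t + dlt * V i t))
             - c1 * (\<Sum>i=1..n. phi i * p i * I i t)"
        unfolding I'_def c1_def sum_distrib_left sum_distrib_right sum_subtractf[symmetric]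
        by (intro sum.cong refl) (simp add: algebra_simps)
      also have "\<dots> \<le> Th t * (\<Sum>i=1..n. phi i * p i * lam i * Ns i) - c1 * (\<Sum>i=1..n. phi i * p i * I i t)"
        using Th0[OF t] SV t phi0 p0 lam0
        by (intro diff_right_mono mult_left_mono sum_mono) (auto intro!: mult_nonneg_nonneg less_imp_le)
      finally have "Th' t \<le> (1/mk) * (Th t * (\<Sum>i=1..n. phi i * p i * lam i * Ns i) - c1 * (\<Sum>i=1..n. phi i * p i * I i t))"
        unfolding Th'_def using mk by (intro mult_left_mono) auto
      also have "\<dots> = Th t * ((1/mk) * (\<Sum>i=1..n. phi i * p i * lam i * Ns i)) - c1 * Th t"
        unfolding Th_eq by (simp add: algebra_simps)
      also have "\<dots> = - c * Th t" unfolding Lam_R c_def by (simp add: algebra_simps)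
      finally show ?thesis .
    qed
    have Th00: "Th 0 \<le> CT * D0"
    proof -
      have "(\<Sum>i=1..n. phi i * p i * I i 0) \<le> (\<Sum>i=1..n. phi i * p i * D0)"
      proof (rule sum_mono)
        fix i assume i: "i \<in> {1..n}"
        show "phi i * p i * I i 0 \<le> phi i * p i * D0"
          using D0i(1)[OF i] phi0[OF i] p0[OF i] by (intro mult_left_mono) auto
      qed
      then have "(1/mk) * (\<Sum>i=1..n. phi i * p i * I i 0) \<le> (1/mk) * (\<Sum>i=1..n. phi i * p i * D0)"
        using mk by (intro mult_left_mono) auto
      then show ?thesis unfolding Th_eq CT_def by (simp add: sum_distrib_right)
    qed
    have ThB: "Th t \<le> CT * D0 * exp (- r * t)" if t: "t \<ge> 0" for t
    proof -
      have "Th t \<le> (\<bar>Th 0\<bar> + 0 / (c - r)) * exp (- r * t)"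
        using decay[OF DTh, of c 0 r] Th'le r t by auto
      also have "\<dots> \<le> CT * D0 * exp (- r * t)" using Th00 Th0[of 0] by (intro mult_right_mono) auto
      finally show ?thesis .
    qed
    have IB: "I k t \<le> KI k * D0 * exp (- r * t)" if k: "k \<in> {1..n}" and t: "t \<ge> 0" for k t
    proof -
      have Dk: "\<forall>s\<ge>0. (I k has_real_derivative I' k s) (at s within {0..})" using DIr[OF k] by auto
      have "\<forall>s\<ge>0. I' k s \<le> - c1 * I k s + (lam k * Ns k * CT * D0) * exp (- r * s)"
      proof (intro allI impI)
        fix s :: real assume s: "s \<ge> 0"
        have "lam k * (S k s + dlt * V k s) * Th s \<le> lam k * Ns k * Th s"
          using lam0[OF k] SV[OF k s] Th0[OF s] by (intro mult_right_mono mult_left_mono) auto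
        also have "\<dots> \<le> lam k * Ns k * (CT * D0 * exp (- r * s))"
          using lam0[OF k] Ns[OF k] ThB[OF s] by (intro mult_left_mono) auto
        finally show "I' k s \<le> - c1 * I k s + (lam k * Ns k * CT * D0) * exp (- r * s)"
          unfolding I'_def c1_def by (simp add: algebra_simps)
      qed
      moreover have "lam k * Ns k * CT * D0 \<ge> 0" using lam0[OF k] Ns[OF k] CT0 D00 by simp
      ultimately have "I k t \<le> (\<bar>I k 0\<bar> + (lam k * Ns k * CT * D0) / (c1 - r)) * exp (- r * t)"
        using decay[OF Dk, of c1 "lam k * Ns k * CT * D0" r] r t by auto
      also have "\<dots> \<le> KI k * D0 * exp (- r * t)"
        using D0i(1)[OF k] unfolding KI_def by (intro mult_right_mono) (auto simp: field_simps)
      finally show ?thesis .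
    qed
    have QB: "Q k t \<le> KQ k * D0 * exp (- r * t)" if k: "k \<in> {1..n}" and t: "t \<ge> 0" for k t
    proof -
      have Dk: "\<forall>s\<ge>0. (Q k has_real_derivative Q' k s) (at s within {0..})" using DQr[OF k] by auto
      have "\<forall>s\<ge>0. Q' k s \<le> - (eta + d) * Q k s + (beta * KI k * D0) * exp (- r * s)"
      proof (intro allI impI)
        fix s :: real assume s: "s \<ge> 0"
        have "beta * I k s \<le> beta * (KI k * D0 * exp (- r * s))"
          using IB[OF k s] params by (intro mult_left_mono) auto
        then show "Q' k s \<le> - (eta + d) * Q k s + (beta * KI k * D0) * exp (- r * s)"
          unfolding Q'_def by (simp add: algebra_simps)
      qed
      moreover have "beta * KI k * D0 \<ge> 0" using KI[OF k] params D00 by simp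
      ultimately have "Q k t \<le> (\<bar>Q k 0\<bar> + (beta * KI k * D0) / (eta + d - r)) * exp (- r * t)"
        using decay[OF Dk, of "eta + d" "beta * KI k * D0" r] r t by auto
      also have "\<dots> \<le> KQ k * D0 * exp (- r * t)"
        using D0i(2)[OF k] unfolding KQ_def by (intro mult_right_mono) (auto simp: field_simps)
      finally show ?thesis .
    qed
    have V0e: "(mu k + d + omega) * V0 b d Phi mu omega k = mu k * Ns k"
      and S0e: "S0 b d Phi mu omega k + V0 b d Phi mu omega k = Ns k" if k: "k \<in> {1..n}" for k
    proof -
      have "mu k + omega + d > 0" using mu0[OF k] params bd by simp
      then have nz: "mu k + omega + d \<noteq> 0" by simp
      show "(mu k + d + omega) * V0 b d Phi mu omega k = mu k * Ns k"
        unfolding V0_def Ns_def using nz by (simp add: field_simps)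
      have "S0 b d Phi mu omega k + V0 b d Phi mu omega k = ((d + omega) * Nstar b d Phi k + mu k * Nstar b d Phi k) / (mu k + omega + d)"
        unfolding V0_def S0_def by (simp add: add_divide_distrib)
      also have "\<dots> = ((mu k + omega + d) * Nstar b d Phi k) / (mu k + omega + d)"
        by (simp add: algebra_simps)
      also have "\<dots> = Ns k" unfolding Ns_def using nz by simp
      finally show "S0 b d Phi mu omega k + V0 b d Phi mu omega k = Ns k" .
    qed
    have VB: "\<bar>V k t - V0 b d Phi mu omega k\<bar> \<le> KV k * D0 * exp (- r * t)" if k: "k \<in> {1..n}" and t: "t \<ge> 0" for k t
    proof -
      define mm where "mm = mu k + d + omega"
      have mm: "r < mm" using r mu0[OF k] unfolding mm_def by simp
      define h where "h s = V0 b d Phi mu omega k - V k s" for s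
      have Dh: "\<forall>s\<ge>0. (h has_real_derivative - V' k s) (at s within {0..})"
        unfolding h_def using DVr[OF k] by (auto intro!: derivative_eq_intros)
      define e where "e s = V k s - V0 b d Phi mu omega k" for s
      have De: "\<forall>s\<ge>0. (e has_real_derivative V' k s) (at s within {0..})"
        unfolding e_def using DVr[OF k] by (auto intro!: derivative_eq_intros)
      define KK where "KK = mu k * (KI k + KQ k) * D0 + lam k * Ns k * CT * D0"
      have Veq: "V' k s = - mm * e s - mu k * (I k s + Q k s) - dlt * lam k * V k s * Th s"
        if s: "s \<ge> 0" for s
      proof -
        have c: "mu k * S k s + mu k * V k s + mu k * I k s + mu k * Q k s = mu k * Ns k"
          using cons[OF k s] by (simp add: distrib_left[symmetric])
        have v: "mu k * V0 b d Phi mu omega k + d * V0 b d Phi mu omega k + omega * V0 b d Phi mu omega k = mu k * Ns k"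
          using V0e[OF k] by (simp add: algebra_simps)
        show ?thesis unfolding V'_def e_def mm_def using c v by (simp add: algebra_simps)
      qed
      have "\<forall>s\<ge>0. - V' k s \<le> - mm * h s + KK * exp (- r * s)"
      proof (intro allI impI)
        fix s :: real assume s: "s \<ge> 0"
        have 1: "mu k * (I k s + Q k s) \<le> mu k * ((KI k + KQ k) * D0 * exp (- r * s))"
          using IB[OF k s] QB[OF k s] mu0[OF k] by (intro mult_left_mono) (auto simp: algebra_simps)
        have "V k s \<le> Ns k" using cons[OF k s] posS[OF k s] posI[OF k s] posQ[OF k s] by simp
        then have "dlt * V k s \<le> 1 * Ns k" using dlt posV[OF k s] Ns[OF k] by (intro mult_mono) auto
        then have "dlt * V k s * (lam k * Th s) \<le> Ns k * (lam k * Th s)"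
          using lam0[OF k] Th0[OF s] by (intro mult_right_mono) auto
        also have "\<dots> \<le> Ns k * (lam k * (CT * D0 * exp (- r * s)))"
          using lam0[OF k] Ns[OF k] ThB[OF s] by (intro mult_left_mono) auto
        finally have 2: "dlt * lam k * V k s * Th s \<le> lam k * Ns k * CT * D0 * exp (- r * s)"
          by (simp add: algebra_simps)
        show "- V' k s \<le> - mm * h s + KK * exp (- r * s)"
          using Veq[OF s] 1 2 unfolding h_def e_def KK_def by (simp add: algebra_simps)
      qed
      moreover have "KK \<ge> 0" unfolding KK_def using mu0[OF k] KI[OF k] KQ[OF k] D00 lam0[OF k] Ns[OF k] CT0
        by (intro add_nonneg_nonneg mult_nonneg_nonneg) auto
      ultimately have "h t \<le> (\<bar>h 0\<bar> + KK / (mm - r)) * exp (- r * t)"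
        using decay[OF Dh, of mm KK r] r mm t by auto
      also have "\<dots> \<le> KV k * D0 * exp (- r * t)"
      proof (intro mult_right_mono)
        have "\<bar>h 0\<bar> \<le> D0" using D0i(3)[OF k] unfolding h_def by simp
        moreover have "KK / (mm - r) = (mu k * (KI k + KQ k) + lam k * Ns k * CT) / (mu k + d + omega - r) * D0"
          unfolding KK_def mm_def by (simp add: field_simps)
        ultimately show "\<bar>h 0\<bar> + KK / (mm - r) \<le> KV k * D0" unfolding KV_def by (simp add: algebra_simps)
      qed simp
      finally have up: "V0 b d Phi mu omega k - V k t \<le> KV k * D0 * exp (- r * t)" unfolding h_def .
      have "\<forall>s\<ge>0. V' k s \<le> - mm * e s + 0 * exp (- r * s)"
      proof (intro allI impI)
        fix s :: real assume s: "s \<ge> 0"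
        have "mu k * (I k s + Q k s) \<ge> 0" using mu0[OF k] posI[OF k s] posQ[OF k s] by simp
        moreover have "dlt * lam k * V k s * Th s \<ge> 0" using dlt lam0[OF k] posV[OF k s] Th0[OF s] by simp
        ultimately show "V' k s \<le> - mm * e s + 0 * exp (- r * s)" using Veq[OF s] by simp
      qed
      then have "e t \<le> (\<bar>e 0\<bar> + 0 / (mm - r)) * exp (- r * t)"
        using decay[OF De, of mm 0 r] r mm t by auto
      also have "\<dots> \<le> KV k * D0 * exp (- r * t)"
        using D0i(3)[OF k] KV[OF k] D00 unfolding e_def
        by (intro mult_right_mono) (auto intro: order_trans[of _ D0] simp: mult_le_cancel_right1)
      finally have lo: "V k t - V0 b d Phi mu omega k \<le> KV k * D0 * exp (- r * t)" unfolding e_def .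
      show ?thesis using up lo by simp
    qed
    show "\<forall>t\<ge>0. \<forall>k\<in>{1..n}.
           0 \<le> I k t \<and> I k t \<le> K * (\<Sum>i=1..n. \<bar>I i 0\<bar> + \<bar>Q i 0\<bar> + \<bar>V i 0 - V0 b d Phi mu omega i\<bar>) * exp (- r * t) \<and>
           0 \<le> Q k t \<and> Q k t \<le> K * (\<Sum>i=1..n. \<bar>I i 0\<bar> + \<bar>Q i 0\<bar> + \<bar>V i 0 - V0 b d Phi mu omega i\<bar>) * exp (- r * t) \<and>
           \<bar>V k t - V0 b d Phi mu omega k\<bar> \<le> K * (\<Sum>i=1..n. \<bar>I i 0\<bar> + \<bar>Q i 0\<bar> + \<bar>V i 0 - V0 b d Phi mu omega i\<bar>) * exp (- r * t) \<and>
           \<bar>S k t - S0 b d Phi mu omega k\<bar> \<le> K * (\<Sum>i=1..n. \<bar>I i 0\<bar> + \<bar>Q i 0\<bar> + \<bar>V i 0 - V0 b d Phi mu omega i\<bar>) * exp (- r * t)"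
    proof (intro allI impI ballI)
      fix t :: real and k assume t: "t \<ge> 0" and k: "k \<in> {1..n}"
      have E: "D0 * exp (- r * t) \<ge> 0" using D00 by simp
      have KI': "KI k * (D0 * exp (- r * t)) \<le> K * (D0 * exp (- r * t))"
        and KQ': "KQ k * (D0 * exp (- r * t)) \<le> K * (D0 * exp (- r * t))"
        and KV': "KV k * (D0 * exp (- r * t)) \<le> K * (D0 * exp (- r * t))"
        and KS': "(KV k + KI k + KQ k) * (D0 * exp (- r * t)) \<le> K * (D0 * exp (- r * t))"
        using Kk[OF k] KI[OF k] KQ[OF k] KV[OF k] E by (intro mult_right_mono; simp)+
      have SS: "S k t - S0 b d Phi mu omega k = (V0 b d Phi mu omega k - V k t) - I k t - Q k t"
        using cons[OF k t] S0e[OF k] by simp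
      have "\<bar>S k t - S0 b d Phi mu omega k\<bar> \<le> \<bar>V k t - V0 b d Phi mu omega k\<bar> + I k t + Q k t"
        unfolding SS using posI[OF k t] posQ[OF k t] by simp
      also have "\<dots> \<le> (KV k + KI k + KQ k) * (D0 * exp (- r * t))"
        using VB[OF k t] IB[OF k t] QB[OF k t] by (simp add: algebra_simps)
      finally have SB: "\<bar>S k t - S0 b d Phi mu omega k\<bar> \<le> K * (D0 * exp (- r * t))" using KS' by linarith
      show "0 \<le> I k t \<and> I k t \<le> K * (\<Sum>i=1..n. \<bar>I i 0\<bar> + \<bar>Q i 0\<bar> + \<bar>V i 0 - V0 b d Phi mu omega i\<bar>) * exp (- r * t) \<and>
           0 \<le> Q k t \<and> Q k t \<le> K * (\<Sum>i=1..n. \<bar>I i 0\<bar> + \<bar>Q i 0\<bar> + \<bar>V i 0 - V0 b d Phi mu omega i\<bar>) * exp (- r * t) \<and>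
           \<bar>V k t - V0 b d Phi mu omega k\<bar> \<le> K * (\<Sum>i=1..n. \<bar>I i 0\<bar> + \<bar>Q i 0\<bar> + \<bar>V i 0 - V0 b d Phi mu omega i\<bar>) * exp (- r * t) \<and>
           \<bar>S k t - S0 b d Phi mu omega k\<bar> \<le> K * (\<Sum>i=1..n. \<bar>I i 0\<bar> + \<bar>Q i 0\<bar> + \<bar>V i 0 - V0 b d Phi mu omega i\<bar>) * exp (- r * t)"
        unfolding D0_def[symmetric]
        using posI[OF k t] posQ[OF k t] IB[OF k t] QB[OF k t] VB[OF k t] SB KI' KQ' KV'
        by (simp add: mult.assoc)
    qed
  qed
qed



lemma expdec:
  assumes r: "(r::real) > 0" shows "((\<lambda>t. exp(-r*t)) \<longlongrightarrow> 0) at_top"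
proof -
  have "LIM t at_top. (-r) * t :> at_bot"
    using filterlim_tendsto_neg_mult_at_bot[OF tendsto_const[of "-r"] _ filterlim_ident] r by simp
  from filterlim_compose[OF exp_at_bot this] show ?thesis by simp
qed

lemma conv_aux:
  fixes f :: "real \<Rightarrow> real"
  assumes A: "\<forall>t\<ge>0. \<bar>f t - l\<bar> \<le> K * D * exp (- r * t)" and r: "r > 0"
  shows "(f \<longlongrightarrow> l) at_top"
proof -
  have lim: "((\<lambda>t. K * D * exp (- r * t)) \<longlongrightarrow> 0) at_top"
    using tendsto_mult[OF tendsto_const[of "K * D"] expdec[OF r]] by simp
  have ev: "eventually (\<lambda>t. norm (f t - l) \<le> K * D * exp (- r * t)) at_top"
    unfolding eventually_at_top_linorder
  proof (intro exI[of _ 0] allI impI)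
    fix t :: real assume "t \<ge> 0"
    then show "norm (f t - l) \<le> K * D * exp (- r * t)" using A by simp
  qed
  have "((\<lambda>t. f t - l) \<longlongrightarrow> 0) at_top"
    by (rule Lim_null_comparison[OF ev lim])
  then show ?thesis by (simp add: LIM_zero_iff)
qed


theorem theorem4p7:
  fixes n :: nat and p :: "nat \<Rightarrow> real" and b d Phi :: real
    and lam phi mu :: "nat \<Rightarrow> real" and beta gamma eta omega dlt :: real
  assumes n_pos: "n \<ge> 1"
    and p_pos: "\<forall>k\<in>{1..n}. p k > 0"
    and p_sum: "(\<Sum>k=1..n. p k) = 1"
    and bd: "b > d" "d > 0"
    and Phi_pos: "Phi > 0"
    and Phi_fix: "Phi = (1 / mean_deg n p) *
                    (\<Sum>i=1..n. real i * p i * b * Phi / (d + b * real i * Phi))"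
    and lam_pos: "\<forall>k\<in>{1..n}. lam k > 0"
    and phi_pos: "\<forall>k\<in>{1..n}. phi k > 0"
    and mu_pos: "\<forall>k\<in>{1..n}. mu k > 0"
    and params: "beta > 0" "gamma > 0" "eta > 0" "omega > 0"
    and dlt: "0 \<le> dlt" "dlt \<le> 1"
    and R0: "R0_tilde n p b d Phi lam phi beta gamma < 1"
  shows
    "(\<forall>\<epsilon>>0. \<exists>\<delta>>0. \<forall>S V I Q.
        sviqs_solution n p b d Phi lam phi mu beta gamma eta omega dlt S V I Q \<and>
        feasible_init n b d Phi S V I Q \<and>
        (\<forall>k\<in>{1..n}. \<bar>S k 0 - S0 b d Phi mu omega k\<bar> < \<delta> \<and>
                     \<bar>V k 0 - V0 b d Phi mu omega k\<bar> < \<delta> \<and>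
                     \<bar>I k 0\<bar> < \<delta> \<and> \<bar>Q k 0\<bar> < \<delta>)
        \<longrightarrow> (\<forall>t\<ge>0. \<forall>k\<in>{1..n}. \<bar>S k t - S0 b d Phi mu omega k\<bar> < \<epsilon> \<and>
                     \<bar>V k t - V0 b d Phi mu omega k\<bar> < \<epsilon> \<and>
                     \<bar>I k t\<bar> < \<epsilon> \<and> \<bar>Q k t\<bar> < \<epsilon>))
     \<and>
     (\<forall>S V I Q.
        sviqs_solution n p b d Phi lam phi mu beta gamma eta omega dlt S V I Q \<and>
        feasible_init n b d Phi S V I Q
        \<longrightarrow> (\<forall>k\<in>{1..n}. ((S k) \<longlongrightarrow> S0 b d Phi mu omega k) at_top \<and>
                         ((V k) \<longlongrightarrow> V0 b d Phi mu omega k) at_top \<and>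
                         ((I k) \<longlongrightarrow> 0) at_top \<and>
                         ((Q k) \<longlongrightarrow> 0) at_top))"
proof -
  from core[OF n_pos p_pos bd Phi_pos lam_pos phi_pos mu_pos params dlt R0]
  obtain r K where r: "r > 0" and K: "K \<ge> 0" and B: "\<forall>S V I Q.
        sviqs_solution n p b d Phi lam phi mu beta gamma eta omega dlt S V I Q \<and>
        feasible_init n b d Phi S V I Q \<longrightarrow>
        (\<forall>t\<ge>0. \<forall>k\<in>{1..n}.
           0 \<le> I k t \<and> I k t \<le> K * (\<Sum>i=1..n. \<bar>I i 0\<bar> + \<bar>Q i 0\<bar> + \<bar>V i 0 - V0 b d Phi mu omega i\<bar>) * exp (- r * t) \<and>
           0 \<le> Q k t \<and> Q k t \<le> K * (\<Sum>i=1..n. \<bar>I i 0\<bar> + \<bar>Q i 0\<bar> + \<bar>V i 0 - V0 b d Phi mu omega i\<bar>) * exp (- r * t) \<and>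
           \<bar>V k t - V0 b d Phi mu omega k\<bar> \<le> K * (\<Sum>i=1..n. \<bar>I i 0\<bar> + \<bar>Q i 0\<bar> + \<bar>V i 0 - V0 b d Phi mu omega i\<bar>) * exp (- r * t) \<and>
           \<bar>S k t - S0 b d Phi mu omega k\<bar> \<le> K * (\<Sum>i=1..n. \<bar>I i 0\<bar> + \<bar>Q i 0\<bar> + \<bar>V i 0 - V0 b d Phi mu omega i\<bar>) * exp (- r * t))"
    by blast
  show ?thesis
  proof (rule conjI)
    show "\<forall>\<epsilon>>0. \<exists>\<delta>>0. \<forall>S V I Q.
        sviqs_solution n p b d Phi lam phi mu beta gamma eta omega dlt S V I Q \<and>
        feasible_init n b d Phi S V I Q \<and>
        (\<forall>k\<in>{1..n}. \<bar>S k 0 - S0 b d Phi mu omega k\<bar> < \<delta> \<and>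
                     \<bar>V k 0 - V0 b d Phi mu omega k\<bar> < \<delta> \<and>
                     \<bar>I k 0\<bar> < \<delta> \<and> \<bar>Q k 0\<bar> < \<delta>)
        \<longrightarrow> (\<forall>t\<ge>0. \<forall>k\<in>{1..n}. \<bar>S k t - S0 b d Phi mu omega k\<bar> < \<epsilon> \<and>
                     \<bar>V k t - V0 b d Phi mu omega k\<bar> < \<epsilon> \<and>
                     \<bar>I k t\<bar> < \<epsilon> \<and> \<bar>Q k t\<bar> < \<epsilon>)"
    proof (intro allI impI)
      fix \<epsilon> :: real assume e: "\<epsilon> > 0"
      define \<delta> where "\<delta> = \<epsilon> / (3 * real n * K + 1)"
      have den: "3 * real n * K + 1 > 0" using K by (simp add: add_nonneg_pos)
      have \<delta>: "\<delta> > 0" unfolding \<delta>_def using e den by simp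
      show "\<exists>\<delta>>0. \<forall>S V I Q.
        sviqs_solution n p b d Phi lam phi mu beta gamma eta omega dlt S V I Q \<and>
        feasible_init n b d Phi S V I Q \<and>
        (\<forall>k\<in>{1..n}. \<bar>S k 0 - S0 b d Phi mu omega k\<bar> < \<delta> \<and>
                     \<bar>V k 0 - V0 b d Phi mu omega k\<bar> < \<delta> \<and>
                     \<bar>I k 0\<bar> < \<delta> \<and> \<bar>Q k 0\<bar> < \<delta>)
        \<longrightarrow> (\<forall>t\<ge>0. \<forall>k\<in>{1..n}. \<bar>S k t - S0 b d Phi mu omega k\<bar> < \<epsilon> \<and>
                     \<bar>V k t - V0 b d Phi mu omega k\<bar> < \<epsilon> \<and>
                     \<bar>I k t\<bar> < \<epsilon> \<and> \<bar>Q k t\<bar> < \<epsilon>)"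
      proof (rule exI[of _ \<delta>], rule conjI[OF \<delta>], intro allI, rule impI)
        fix S V I Q
        assume H: "sviqs_solution n p b d Phi lam phi mu beta gamma eta omega dlt S V I Q \<and>
          feasible_init n b d Phi S V I Q \<and>
          (\<forall>k\<in>{1..n}. \<bar>S k 0 - S0 b d Phi mu omega k\<bar> < \<delta> \<and>
                     \<bar>V k 0 - V0 b d Phi mu omega k\<bar> < \<delta> \<and>
                     \<bar>I k 0\<bar> < \<delta> \<and> \<bar>Q k 0\<bar> < \<delta>)"
        define D0 where "D0 = (\<Sum>i=1..n. \<bar>I i 0\<bar> + \<bar>Q i 0\<bar> + \<bar>V i 0 - V0 b d Phi mu omega i\<bar>)"
        have D00: "D0 \<ge> 0" unfolding D0_def by (intro sum_nonneg) auto
        have "D0 < (\<Sum>i=1..n. 3 * \<delta>)" unfolding D0_def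
        proof (rule sum_strict_mono)
          show "finite {1..n}" by simp
          show "{1..n} \<noteq> {}" using n_pos by simp
          fix i assume "i \<in> {1..n}"
          then have "\<bar>V i 0 - V0 b d Phi mu omega i\<bar> < \<delta> \<and> \<bar>I i 0\<bar> < \<delta> \<and> \<bar>Q i 0\<bar> < \<delta>"
            using H[THEN conjunct2, THEN conjunct2] by blast
          then show "\<bar>I i 0\<bar> + \<bar>Q i 0\<bar> + \<bar>V i 0 - V0 b d Phi mu omega i\<bar> < 3 * \<delta>" by linarith
        qed
        then have D0lt: "D0 < 3 * real n * \<delta>" by simp
        have "K * D0 \<le> K * (3 * real n * \<delta>)" using K D0lt by (intro mult_left_mono) auto
        also have "\<dots> = \<epsilon> * ((3 * real n * K) / (3 * real n * K + 1))"
          unfolding \<delta>_def using den by (simp add: field_simps)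
        also have "\<dots> < \<epsilon>" using e den by (simp add: field_simps)
        finally have KD: "K * D0 < \<epsilon>" .
        show "\<forall>t\<ge>0. \<forall>k\<in>{1..n}. \<bar>S k t - S0 b d Phi mu omega k\<bar> < \<epsilon> \<and>
                     \<bar>V k t - V0 b d Phi mu omega k\<bar> < \<epsilon> \<and>
                     \<bar>I k t\<bar> < \<epsilon> \<and> \<bar>Q k t\<bar> < \<epsilon>"
        proof (intro allI impI ballI)
          fix t :: real and k assume t: "t \<ge> 0" and k: "k \<in> {1..n}"
          have "exp (- r * t) \<le> 1" using r t by simp
          then have "K * D0 * exp (- r * t) \<le> K * D0 * 1" using K D00 by (intro mult_left_mono) auto
          then have lt: "K * D0 * exp (- r * t) < \<epsilon>" using KD by simp
          note X = B[rule_format, OF conjI[OF H[THEN conjunct1] H[THEN conjunct2, THEN conjunct1]] t k, folded D0_def]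
          show "\<bar>S k t - S0 b d Phi mu omega k\<bar> < \<epsilon> \<and>
                     \<bar>V k t - V0 b d Phi mu omega k\<bar> < \<epsilon> \<and>
                     \<bar>I k t\<bar> < \<epsilon> \<and> \<bar>Q k t\<bar> < \<epsilon>"
            using X lt by auto
        qed
      qed
    qed
    show "\<forall>S V I Q.
        sviqs_solution n p b d Phi lam phi mu beta gamma eta omega dlt S V I Q \<and>
        feasible_init n b d Phi S V I Q
        \<longrightarrow> (\<forall>k\<in>{1..n}. ((S k) \<longlongrightarrow> S0 b d Phi mu omega k) at_top \<and>
                         ((V k) \<longlongrightarrow> V0 b d Phi mu omega k) at_top \<and>
                         ((I k) \<longlongrightarrow> 0) at_top \<and>
                         ((Q k) \<longlongrightarrow> 0) at_top)"
    proof (intro allI impI ballI)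
      fix S V I Q k
      assume H: "sviqs_solution n p b d Phi lam phi mu beta gamma eta omega dlt S V I Q \<and>
          feasible_init n b d Phi S V I Q" and k: "k \<in> {1..n}"
      define D0 where "D0 = (\<Sum>i=1..n. \<bar>I i 0\<bar> + \<bar>Q i 0\<bar> + \<bar>V i 0 - V0 b d Phi mu omega i\<bar>)"
      have BB: "0 \<le> I k t \<and> I k t \<le> K * D0 * exp (- r * t) \<and>
           0 \<le> Q k t \<and> Q k t \<le> K * D0 * exp (- r * t) \<and>
           \<bar>V k t - V0 b d Phi mu omega k\<bar> \<le> K * D0 * exp (- r * t) \<and>
           \<bar>S k t - S0 b d Phi mu omega k\<bar> \<le> K * D0 * exp (- r * t)" if t: "t \<ge> 0" for t
        using B[rule_format, OF H t k, folded D0_def] .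
      have i1: "\<forall>t\<ge>0. \<bar>I k t - 0\<bar> \<le> K * D0 * exp (- r * t)"
        using BB by (simp add: abs_of_nonneg)
      have i2: "\<forall>t\<ge>0. \<bar>Q k t - 0\<bar> \<le> K * D0 * exp (- r * t)"
        using BB by (simp add: abs_of_nonneg)
      have i3: "\<forall>t\<ge>0. \<bar>S k t - S0 b d Phi mu omega k\<bar> \<le> K * D0 * exp (- r * t)"
        using BB by simp
      have i4: "\<forall>t\<ge>0. \<bar>V k t - V0 b d Phi mu omega k\<bar> \<le> K * D0 * exp (- r * t)"
        using BB by simp
      show "((S k) \<longlongrightarrow> S0 b d Phi mu omega k) at_top \<and>
                         ((V k) \<longlongrightarrow> V0 b d Phi mu omega k) at_top \<and>
                         ((I k) \<longlongrightarrow> 0) at_top \<and>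
                         ((Q k) \<longlongrightarrow> 0) at_top"
        using conv_aux[OF i1 r] conv_aux[OF i2 r] conv_aux[OF i3 r] conv_aux[OF i4 r] by blast
    qed
  qed
qed

end
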